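(* Let $N=2^n$ and $i\in[0,N)$. Then $S^{(n)}_{i,w}=0$ for all $w<\mathrm{w}(\mathbf{g}_i)$, where $\mathrm{w}(\mathbf{g}_i)=2^{p_{n-1}(i)}$, and the first nonzero component $s^{(n)}_i:=S^{(n)}_{i,\mathrm{w}(\mathbf{g}_i)}$ satisfies $$\log_2 s^{(n)}_i=\sum_{j=0}^{n-1}(1-b_j(i))\,2^{p_j(i)}.$$
   Context: All vectors are binary (over $GF(2)$), indices are zero-based. Let $G_2=\begin{pmatrix}1&0\\1&1\end{pmatrix}$ and $G_N=G_2^{\otimes n}$ for $N=2^n$, with rows $\mathbf{g}_0,\ldots,\mathbf{g}_{N-1}$; $\mathrm{w}(\cdot)$ is Hamming weight. $S^{(n)}_{i,w}$ is the number of words of Hamming weight $w$ in $\mathbf{g}_i+\langle\mathbf{g}_{i+1},\ldots,\mathbf{g}_{N-1}\rangle$. For $i\in[0,N)$ write $i=\sum_{j=0}^{n-1}b_j(i)2^j$ with $b_j(i)\in\{0,1\}$, and $p_j(i):=\sum_{s=0}^{j}b_s(i)$. *)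

theory Defs
  imports Complex_Main
begin

text \<open>Binary vectors of length N are represented as functions nat \<Rightarrow> bool
  (True = 1), with coordinates in {0..<N}; entries outside are False.\<close>

definition G2 :: "nat \<Rightarrow> nat \<Rightarrow> bool" where
  "G2 a b = (a < 2 \<and> b < 2 \<and> b \<le> a)"

text \<open>Kronecker power G_N = G_2^{\<otimes> n}, via G_2^{\<otimes>(n+1)} = G_2 \<otimes> G_2^{\<otimes> n};
  GN n i k is the entry in row i, column k.\<close>
fun GN :: "nat \<Rightarrow> nat \<Rightarrow> nat \<Rightarrow> bool" where
  "GN 0 i k = (i = 0 \<and> k = 0)"
| "GN (Suc n) i k = (i < 2 * 2^n \<and> k < 2 * 2^n \<and>
      G2 (i div 2^n) (k div 2^n) \<and> GN n (i mod 2^n) (k mod 2^n))"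

definition grow :: "nat \<Rightarrow> nat \<Rightarrow> nat \<Rightarrow> bool" where
  "grow n i = (\<lambda>k. GN n i k)"

definition hw :: "nat \<Rightarrow> (nat \<Rightarrow> bool) \<Rightarrow> nat" where
  "hw n v = card {k. k < 2^n \<and> v k}"

definition rowsum :: "nat \<Rightarrow> nat set \<Rightarrow> nat \<Rightarrow> bool" where
  "rowsum n T = (\<lambda>k. odd (card {j \<in> T. grow n j k}))"

definition coset :: "nat \<Rightarrow> nat \<Rightarrow> (nat \<Rightarrow> bool) set" where
  "coset n i = {(\<lambda>k. grow n i k \<noteq> rowsum n T k) | T. T \<subseteq> {i+1..<2^n}}"

definition S :: "nat \<Rightarrow> nat \<Rightarrow> nat \<Rightarrow> nat" where
  "S n i w = card {v \<in> coset n i. hw n v = w}"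

definition bd :: "nat \<Rightarrow> nat \<Rightarrow> nat" where
  "bd j i = (i div 2^j) mod 2"

definition pp :: "nat \<Rightarrow> nat \<Rightarrow> nat" where
  "pp j i = (\<Sum>s\<le>j. bd s i)"

end

theory Submission
  imports Defs
begin

definition V :: "nat \<Rightarrow> (nat \<Rightarrow> bool) set" where
  "V n = {v. \<forall>k. v k \<longrightarrow> k < 2^n}"
definition join :: "nat \<Rightarrow> (nat \<Rightarrow> bool) \<Rightarrow> (nat \<Rightarrow> bool) \<Rightarrow> nat \<Rightarrow> bool" where
  "join n u v = (\<lambda>k. if k < 2^n then u k else v (k - 2^n))"
definition xr :: "(nat \<Rightarrow> bool) \<Rightarrow> (nat \<Rightarrow> bool) \<Rightarrow> nat \<Rightarrow> bool" where
  "xr u v = (\<lambda>k. u k \<noteq> v k)"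

lemma GN_bound: "GN n i k \<Longrightarrow> i < 2^n \<and> k < 2^n"
  by (induction n arbitrary: i k) auto

lemma grow_V: "grow n i \<in> V n"
  using GN_bound unfolding V_def grow_def by blast

lemma rowsum_V: "rowsum n T \<in> V n"
proof -
  { fix k assume "rowsum n T k"
    then have "card {j \<in> T. grow n j k} \<noteq> 0" unfolding rowsum_def by (metis dvd_0_right)
    then obtain j where "grow n j k" by (metis (no_types, lifting) card.empty empty_Collect_eq)
    then have "k < 2^n" using GN_bound unfolding grow_def by blast }
  then show ?thesis unfolding V_def by blast
qed

lemma grow_lo: assumes "i < 2^n" shows "grow (Suc n) i = join n (grow n i) (\<lambda>_. False)"
proof
  fix k show "grow (Suc n) i k = join n (grow n i) (\<lambda>_. False) k"
  proof (cases "k < 2^n")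
    case True then show ?thesis using assms by (simp add: grow_def join_def G2_def)
  next
    case False
    then have "k div 2^n \<ge> 1" using div_le_mono[of "2^n" k "2^n"] by simp
    then show ?thesis using assms False by (auto simp add: grow_def join_def G2_def)
  qed
qed

lemma grow_hi: assumes "i < 2^n" shows "grow (Suc n) (2^n + i) = join n (grow n i) (grow n i)"
proof
  fix k show "grow (Suc n) (2^n+i) k = join n (grow n i) (grow n i) k"
  proof (cases "k < 2^n")
    case True then show ?thesis using assms by (simp add: grow_def join_def G2_def)
  next
    case False
    show ?thesis
    proof (cases "k < 2*2^n")
      case True
      then have "k div 2^n = 1" using False div_le_mono[of "2^n" k "2^n"] less_mult_imp_div_less[of k 2 "2^n"] by (simp add: mult.commute)
      moreover have "k mod 2^n = k - 2^n" using False True by (simp add: le_mod_geq)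
      ultimately show ?thesis using assms False True by (auto simp add: grow_def join_def G2_def)
    next
      case F2: False
      then have "\<not> GN n i (k - 2^n)" using GN_bound by force
      then show ?thesis using F2 False by (simp add: grow_def join_def)
    qed
  qed
qed

lemma rowsum_Suc:
  assumes T: "T \<subseteq> {..<2*2^n}"
  shows "rowsum (Suc n) T = join n (xr (rowsum n {j\<in>T. j<2^n}) (rowsum n {j. 2^n+j\<in>T})) (rowsum n {j. 2^n+j\<in>T})"
proof
  fix k
  define N :: nat where "N = 2^n"
  define A where "A = {j\<in>T. j<N}"
  define B where "B = {j. N+j\<in>T}"
  have finT: "finite T" using T finite_subset by blast
  have finA: "finite A" using finT unfolding A_def by simp
  have Bsub: "B \<subseteq> {..<N}" using T unfolding B_def N_def by auto
  have finB: "finite B" using Bsub finite_subset by blast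
  have split: "{j\<in>T. grow (Suc n) j k} = {j\<in>A. grow (Suc n) j k} \<union> (\<lambda>j. N+j) ` {j\<in>B. grow (Suc n) (N+j) k}"
  proof (rule set_eqI)
    fix j show "j \<in> {j\<in>T. grow (Suc n) j k} \<longleftrightarrow> j \<in> {j\<in>A. grow (Suc n) j k} \<union> (\<lambda>j. N+j) ` {j\<in>B. grow (Suc n) (N+j) k}"
    proof (cases "j < N")
      case True then show ?thesis unfolding A_def B_def by auto
    next
      case False
      then have "j = N + (j - N)" by simp
      have im: "j \<in> (\<lambda>j. N+j) ` X \<longleftrightarrow> j - N \<in> X" for X
        using False by (auto intro: image_eqI[where x="j-N"])
      show ?thesis using False by (simp add: im A_def B_def)
    qed
  qed
  have disj: "{j\<in>A. grow (Suc n) j k} \<inter> (\<lambda>j. N+j) ` {j\<in>B. grow (Suc n) (N+j) k} = {}"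
    unfolding A_def by auto
  have c: "card {j\<in>T. grow (Suc n) j k} = card {j\<in>A. grow (Suc n) j k} + card {j\<in>B. grow (Suc n) (N+j) k}"
    unfolding split
    by (subst card_Un_disjoint) (use finA finB disj in \<open>auto simp: card_image inj_on_def\<close>)
  have eA: "{j\<in>A. grow (Suc n) j k} = {j\<in>A. k < N \<and> grow n j k}"
    unfolding A_def N_def by (auto simp: join_def grow_lo split: if_splits)
  have eB: "{j\<in>B. grow (Suc n) (N+j) k} = {j\<in>B. grow n j (if k < N then k else k - N)}"
    using Bsub unfolding N_def by (auto simp: join_def grow_hi split: if_splits)
  show "rowsum (Suc n) T k = join n (xr (rowsum n {j\<in>T. j<2^n}) (rowsum n {j. 2^n+j\<in>T})) (rowsum n {j. 2^n+j\<in>T}) k"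
  proof (cases "k < N")
    case True
    have "{j\<in>A. k < N \<and> grow n j k} = {j\<in>A. grow n j k}" using True by auto
    then show ?thesis using True c eA eB unfolding rowsum_def join_def xr_def
      by (simp add: A_def B_def N_def)
  next
    case False
    have "{j\<in>A. k < N \<and> grow n j k} = {}" using False by auto
    have "{j\<in>A. grow (Suc n) j k} = {}" using eA False by auto
    then have z: "card {j\<in>A. grow (Suc n) j k} = 0" by (metis card.empty)
    have "card {j\<in>T. grow (Suc n) j k} = card {j\<in>B. grow n j (k - N)}" using c z eB False by simp
    then show ?thesis using False unfolding rowsum_def join_def xr_def
      by (simp add: A_def B_def N_def)
  qed
qed

lemma span: "v \<in> V n \<Longrightarrow> \<exists>T \<subseteq> {..<2^n}. rowsum n T = v"
proof (induction n arbitrary: v)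
  case 0
  then have v: "\<And>k. v k \<Longrightarrow> k = 0" unfolding V_def by auto
  show ?case
  proof (cases "v 0")
    case True
    have "rowsum 0 {0} = v"
    proof
      fix k show "rowsum 0 {0} k = v k"
        using v True by (cases "k = 0") (auto simp: rowsum_def grow_def)
    qed
    then show ?thesis by auto
  next
    case False
    have "rowsum 0 {} = v"
    proof
      fix k show "rowsum 0 {} k = v k"
        using v False by (cases "k = 0") (auto simp: rowsum_def grow_def)
    qed
    then show ?thesis by auto
  qed
next
  case (Suc n)
  define N :: nat where "N = 2^n"
  define a where "a = (\<lambda>k. k < N \<and> v k)"
  define b where "b = (\<lambda>k. v (N + k))"
  have bV: "b \<in> V n" using Suc.prems unfolding V_def b_def N_def by auto
  have abV: "xr a b \<in> V n" using bV unfolding V_def a_def xr_def N_def by auto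
  obtain TB where TB: "TB \<subseteq> {..<N}" "rowsum n TB = b" using Suc.IH[OF bV] N_def by auto
  obtain TA where TA: "TA \<subseteq> {..<N}" "rowsum n TA = xr a b" using Suc.IH[OF abV] N_def by auto
  define T where "T = TA \<union> (\<lambda>j. N + j) ` TB"
  have Tsub: "T \<subseteq> {..<2*2^n}" using TA TB unfolding T_def N_def by auto
  have e1: "{j\<in>T. j<2^n} = TA" using TA unfolding T_def N_def by auto
  have e2: "{j. 2^n+j\<in>T} = TB" using TA unfolding T_def N_def by auto
  have "rowsum (Suc n) T = v"
  proof
    fix k
    show "rowsum (Suc n) T k = v k"
      unfolding rowsum_Suc[OF Tsub] e1 e2 TA TB
      using Suc.prems by (auto simp: join_def xr_def a_def b_def N_def)
  qed
  moreover have "T \<subseteq> {..<2^Suc n}" using Tsub by simp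
  ultimately show ?case by blast
qed

lemma hw_join: assumes "u \<in> V n" "v \<in> V n"
  shows "hw (Suc n) (join n u v) = hw n u + hw n v"
proof -
  define N :: nat where "N = 2^n"
  have e: "{k. k < 2^Suc n \<and> join n u v k} = {k. k < N \<and> u k} \<union> (\<lambda>k. N + k) ` {k. k < N \<and> v k}"
  proof (rule set_eqI)
    fix k show "k \<in> {k. k < 2^Suc n \<and> join n u v k} \<longleftrightarrow> k \<in> {k. k < N \<and> u k} \<union> (\<lambda>k. N + k) ` {k. k < N \<and> v k}"
    proof (cases "k < N")
      case True then show ?thesis unfolding N_def join_def by auto
    next
      case False
      have im: "k \<in> (\<lambda>j. 2^n+j) ` X \<longleftrightarrow> k - 2^n \<in> X" for X
        using False unfolding N_def by (auto intro: image_eqI[where x="k-2^n"])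
      show ?thesis using False by (auto simp add: im join_def N_def)
    qed
  qed
  have "card ({k. k < N \<and> u k} \<union> (\<lambda>k. N + k) ` {k. k < N \<and> v k}) = card {k. k < N \<and> u k} + card {k. k < N \<and> v k}"
    by (subst card_Un_disjoint) (auto simp: card_image inj_on_def)
  then show ?thesis unfolding hw_def e N_def by simp
qed

lemma coset_img: "coset n i = (\<lambda>T. xr (grow n i) (rowsum n T)) ` Pow {i+1..<2^n}"
  unfolding coset_def xr_def by auto

lemma finite_coset: "finite (coset n i)"
  unfolding coset_img by simp

lemma xr_V: "u \<in> V n \<Longrightarrow> v \<in> V n \<Longrightarrow> xr u v \<in> V n"
  unfolding V_def xr_def by auto

lemma coset_V: "coset n i \<subseteq> V n"
  unfolding coset_img using xr_V grow_V rowsum_V by blast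

lemma xr_join: "xr (join n a b) (join n c d) = join n (xr a c) (xr b d)"
  unfolding xr_def join_def by auto

lemma coset_lo: assumes i: "i < 2^n"
  shows "coset (Suc n) i = (\<lambda>(x,y). join n (xr x y) y) ` (coset n i \<times> V n)"
proof (rule set_eqI, rule iffI)
  fix v assume "v \<in> coset (Suc n) i"
  then obtain T where T: "T \<subseteq> {i+1..<2^Suc n}" and v: "v = xr (grow (Suc n) i) (rowsum (Suc n) T)"
    unfolding coset_img by auto
  define A where "A = {j\<in>T. j<2^n}"
  define B where "B = {j. 2^n+j\<in>T}"
  have Tsub: "T \<subseteq> {..<2*2^n}" using T by auto
  have Asub: "A \<subseteq> {i+1..<2^n}" using T unfolding A_def by auto
  have x: "xr (grow n i) (rowsum n A) \<in> coset n i" unfolding coset_img using Asub by auto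
  have "v = join n (xr (xr (grow n i) (rowsum n A)) (rowsum n B)) (rowsum n B)"
    unfolding v grow_lo[OF i] rowsum_Suc[OF Tsub] A_def[symmetric] B_def[symmetric]
    unfolding xr_def join_def by auto
  then show "v \<in> (\<lambda>(x,y). join n (xr x y) y) ` (coset n i \<times> V n)"
    using x rowsum_V by blast
next
  fix v assume "v \<in> (\<lambda>(x,y). join n (xr x y) y) ` (coset n i \<times> V n)"
  then obtain x y where x: "x \<in> coset n i" and y: "y \<in> V n" and v: "v = join n (xr x y) y" by auto
  obtain A where A: "A \<subseteq> {i+1..<2^n}" and xA: "x = xr (grow n i) (rowsum n A)"
    using x unfolding coset_img by auto
  obtain B where B: "B \<subseteq> {..<2^n}" and yB: "rowsum n B = y" using span[OF y] by auto
  define T where "T = A \<union> (\<lambda>j. 2^n + j) ` B"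
  have Tsub: "T \<subseteq> {i+1..<2^Suc n}" using A B i unfolding T_def by force
  have Tsub2: "T \<subseteq> {..<2*2^n}" using Tsub by auto
  have e1: "{j\<in>T. j<2^n} = A" using A unfolding T_def by auto
  have e2: "{j. 2^n+j\<in>T} = B" using A unfolding T_def by auto
  have "v = xr (grow (Suc n) i) (rowsum (Suc n) T)"
    unfolding v grow_lo[OF i] rowsum_Suc[OF Tsub2] e1 e2 xA yB
    unfolding xr_def join_def by auto
  then show "v \<in> coset (Suc n) i" unfolding coset_img using Tsub by auto
qed

lemma coset_hi: assumes i: "i < 2^n"
  shows "coset (Suc n) (2^n + i) = (\<lambda>x. join n x x) ` coset n i"
proof (rule set_eqI, rule iffI)
  fix v assume "v \<in> coset (Suc n) (2^n+i)"
  then obtain T where T: "T \<subseteq> {2^n+i+1..<2^Suc n}" and v: "v = xr (grow (Suc n) (2^n+i)) (rowsum (Suc n) T)"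
    unfolding coset_img by auto
  define B where "B = {j. 2^n+j\<in>T}"
  have Tsub: "T \<subseteq> {..<2*2^n}" using T by auto
  have e1: "{j\<in>T. j<2^n} = {}" using T by auto
  have Bsub: "B \<subseteq> {i+1..<2^n}" using T unfolding B_def by auto
  have r0: "rowsum n {} = (\<lambda>_. False)" unfolding rowsum_def by auto
  have x: "xr (grow n i) (rowsum n B) \<in> coset n i" unfolding coset_img using Bsub by auto
  have "v = join n (xr (grow n i) (rowsum n B)) (xr (grow n i) (rowsum n B))"
    unfolding v grow_hi[OF i] rowsum_Suc[OF Tsub] e1 r0 B_def[symmetric]
    unfolding xr_def join_def by auto
  then show "v \<in> (\<lambda>x. join n x x) ` coset n i" using x by blast
next
  fix v assume "v \<in> (\<lambda>x. join n x x) ` coset n i"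
  then obtain x where x: "x \<in> coset n i" and v: "v = join n x x" by auto
  obtain B where B: "B \<subseteq> {i+1..<2^n}" and xB: "x = xr (grow n i) (rowsum n B)"
    using x unfolding coset_img by auto
  define T where "T = (\<lambda>j. 2^n + j) ` B"
  have Tsub: "T \<subseteq> {2^n+i+1..<2^Suc n}" using B unfolding T_def by auto
  have Tsub2: "T \<subseteq> {..<2*2^n}" using Tsub by auto
  have e1: "{j\<in>T. j<2^n} = {}" unfolding T_def by auto
  have e2: "{j. 2^n+j\<in>T} = B" unfolding T_def by auto
  have r0: "rowsum n {} = (\<lambda>_. False)" unfolding rowsum_def by auto
  have "v = xr (grow (Suc n) (2^n+i)) (rowsum (Suc n) T)"
    unfolding v grow_hi[OF i] rowsum_Suc[OF Tsub2] e1 e2 xB r0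
    unfolding xr_def join_def by auto
  then show "v \<in> coset (Suc n) (2^n+i)" unfolding coset_img using Tsub by auto
qed

lemma hw_xr: assumes "x \<in> V n" "y \<in> V n"
  shows "hw n (xr x y) + hw n y = hw n x + 2 * card {k. k<2^n \<and> y k \<and> \<not> x k}"
proof -
  define X where "X = {k. k<2^n \<and> x k}"
  define Y where "Y = {k. k<2^n \<and> y k}"
  have fX: "finite X" "finite Y" unfolding X_def Y_def by auto
  have D: "{k. k<2^n \<and> y k \<and> \<not> x k} = Y - X" unfolding X_def Y_def by auto
  have e: "{k. k<2^n \<and> xr x y k} = (X - Y) \<union> (Y - X)" unfolding X_def Y_def xr_def by auto
  have c1: "card ((X - Y) \<union> (Y - X)) = card (X - Y) + card (Y - X)"
    by (rule card_Un_disjoint) (use fX in auto)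
  have "Y = (Y \<inter> X) \<union> (Y - X)" by auto
  then have c2: "card Y = card (Y \<inter> X) + card (Y - X)"
    by (metis Diff_disjoint card_Un_disjoint fX(2) finite_Diff finite_Int inf.commute inf_sup_aci(1) Int_Diff_disjoint)
  have "X = (X - Y) \<union> (X \<inter> Y)" by auto
  then have c3: "card X = card (X - Y) + card (X \<inter> Y)"
    by (metis Diff_disjoint card_Un_disjoint fX(1) finite_Diff finite_Int inf.commute Int_Diff_disjoint)
  have "X \<inter> Y = Y \<inter> X" by auto
  then show ?thesis unfolding hw_def e c1 D X_def[symmetric] Y_def[symmetric] using c2 c3 by simp
qed

lemma card_sub: assumes "x \<in> V n" shows "card {y. \<forall>k. y k \<longrightarrow> x k} = 2 ^ hw n x"
proof -
  have e: "{k. x k} = {k. k<2^n \<and> x k}" using assms unfolding V_def by auto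
  have b: "bij_betw (\<lambda>y. {k. y k}) {y. \<forall>k. y k \<longrightarrow> x k} (Pow {k. x k})"
    unfolding bij_betw_def
  proof
    show "inj_on (\<lambda>y. {k. y k}) {y. \<forall>k. y k \<longrightarrow> x k}" unfolding inj_on_def by auto
    show "(\<lambda>y. {k. y k}) ` {y. \<forall>k. y k \<longrightarrow> x k} = Pow {k. x k}"
    proof (rule set_eqI, rule iffI)
      fix S assume "S \<in> Pow {k. x k}"
      then have "(\<lambda>k. k \<in> S) \<in> {y. \<forall>k. y k \<longrightarrow> x k}" "S = {k. (\<lambda>k. k \<in> S) k}" by auto
      then show "S \<in> (\<lambda>y. {k. y k}) ` {y. \<forall>k. y k \<longrightarrow> x k}" by blast
    qed auto
  qed
  have "card {y. \<forall>k. y k \<longrightarrow> x k} = card (Pow {k. x k})" using bij_betw_same_card[OF b] .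
  also have "\<dots> = 2 ^ card {k. x k}" by (simp add: card_Pow e)
  finally show ?thesis unfolding hw_def e .
qed

definition popc :: "nat \<Rightarrow> nat \<Rightarrow> nat" where "popc n i = (\<Sum>s<n. bd s i)"
definition EE :: "nat \<Rightarrow> nat \<Rightarrow> nat" where "EE n i = (\<Sum>j<n. (1 - bd j i) * 2 ^ pp j i)"

lemma bd_lo: "i < 2^n \<Longrightarrow> bd n i = 0" unfolding bd_def by simp
lemma bd_hi: "i < 2^n \<Longrightarrow> bd n (2^n + i) = 1" unfolding bd_def by simp
lemma bd_shift: assumes "j < n" shows "bd j (2^n + i) = bd j i"
proof -
  have "(2::nat)^n = 2^j * 2^(n-j)" using assms by (simp add: power_add[symmetric])
  then have "(2^n + i) div 2^j = 2^(n-j) + i div 2^j" by simp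
  moreover have "(2::nat)^(n-j) = 2 * 2^(n-j-1)" using assms
    by (metis Suc_diff_Suc diff_Suc_1 diff_Suc_eq_diff_pred power_Suc)
  ultimately show ?thesis unfolding bd_def by simp
qed
lemma pp_popc: "pp j i = popc (Suc j) i" unfolding pp_def popc_def using lessThan_Suc_atMost by simp
lemma popc_Suc: "popc (Suc n) i = popc n i + bd n i" unfolding popc_def by simp
lemma pp_shift: "j < n \<Longrightarrow> pp j (2^n + i) = pp j i"
  unfolding pp_def by (rule sum.cong) (auto simp: bd_shift)
lemma popc_shift: "popc n (2^n + i) = popc n i"
  unfolding popc_def by (rule sum.cong) (auto simp: bd_shift)
lemma EE_lo: "i < 2^n \<Longrightarrow> EE (Suc n) i = EE n i + 2 ^ popc n i"
  unfolding EE_def by (simp add: bd_lo pp_popc popc_Suc)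
lemma EE_hi: "i < 2^n \<Longrightarrow> EE (Suc n) (2^n + i) = EE n i"
proof -
  assume i: "i < 2^n"
  have "EE n (2^n + i) = EE n i" unfolding EE_def by (rule sum.cong) (auto simp: bd_shift pp_shift)
  then show ?thesis using i unfolding EE_def by (simp add: bd_hi)
qed

lemma F_V: "(\<lambda>_. False) \<in> V n" unfolding V_def by simp
lemma hw_F: "hw n (\<lambda>_. False) = 0" unfolding hw_def by simp

lemma main: "i < 2^n \<Longrightarrow> hw n (grow n i) = 2^popc n i \<and> (\<forall>v\<in>coset n i. 2^popc n i \<le> hw n v)
   \<and> card {v\<in>coset n i. hw n v = 2^popc n i} = 2^EE n i"
proof (induction n arbitrary: i)
  case 0
  then have i: "i = 0" by simp
  have g: "hw 0 (grow 0 0) = 1"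
  proof -
    have "{k. k < 2^0 \<and> grow 0 0 k} = {0}" unfolding grow_def by auto
    then show ?thesis unfolding hw_def by simp
  qed
  have r0: "rowsum 0 {} = (\<lambda>_. False)" unfolding rowsum_def by auto
  have c: "coset 0 0 = {grow 0 0}" by (simp add: coset_img xr_def r0)
  have "{v\<in>coset 0 0. hw 0 v = 1} = {grow 0 0}" using g c by auto
  then show ?case using g unfolding i c popc_def EE_def by simp
next
  case (Suc n)
  show ?case
  proof (cases "i < 2^n")
    case True
    note IH = Suc.IH[OF True]
    define p where "p = popc n i"
    have pS: "popc (Suc n) i = p" unfolding p_def popc_Suc bd_lo[OF True] by simp
    have ES: "EE (Suc n) i = EE n i + 2^p" unfolding p_def EE_lo[OF True] ..
    have g: "hw (Suc n) (grow (Suc n) i) = 2^p"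
      unfolding grow_lo[OF True] hw_join[OF grow_V F_V] hw_F using IH p_def by simp
    have wt: "hw (Suc n) (join n (xr x y) y) = hw n x + 2 * card {k. k<2^n \<and> y k \<and> \<not> x k}"
      if "x \<in> coset n i" "y \<in> V n" for x y
    proof -
      have xV: "x \<in> V n" using that coset_V by blast
      show ?thesis unfolding hw_join[OF xr_V[OF xV that(2)] that(2)] using hw_xr[OF xV that(2)] .
    qed
    have lb: "\<forall>v\<in>coset (Suc n) i. 2^p \<le> hw (Suc n) v"
    proof
      fix v assume "v \<in> coset (Suc n) i"
      then obtain x y where "x \<in> coset n i" "y \<in> V n" "v = join n (xr x y) y"
        unfolding coset_lo[OF True] by auto
      then show "2^p \<le> hw (Suc n) v" using wt IH p_def by fastforce
    qed
    define X where "X = {x\<in>coset n i. hw n x = 2^p}"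
    define F where "F = (\<lambda>(x,y). join n (xr x y) y)"
    have eq: "{v\<in>coset (Suc n) i. hw (Suc n) v = 2^p} = F ` (SIGMA x:X. {y. \<forall>k. y k \<longrightarrow> x k})"
    proof (rule set_eqI, rule iffI)
      fix v assume "v \<in> {v\<in>coset (Suc n) i. hw (Suc n) v = 2^p}"
      then obtain x y where xy: "x \<in> coset n i" "y \<in> V n" "v = join n (xr x y) y" and h: "hw (Suc n) v = 2^p"
        unfolding coset_lo[OF True] by auto
      have h2: "hw n x + 2 * card {k. k<2^n \<and> y k \<and> \<not> x k} = 2^p" using wt xy h by simp
      have "2^p \<le> hw n x" using IH xy p_def by auto
      then have hx: "hw n x = 2^p" using h2 by linarith
      then have c0: "card {k. k<2^n \<and> y k \<and> \<not> x k} = 0" using h2 by simp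
      have "finite {k. k<2^n \<and> y k \<and> \<not> x k}" by simp
      then have "{k. k<2^n \<and> y k \<and> \<not> x k} = {}" using c0 by (meson card_0_eq)
      then have "\<forall>k. y k \<longrightarrow> x k" using xy(2) unfolding V_def by auto
      then show "v \<in> F ` (SIGMA x:X. {y. \<forall>k. y k \<longrightarrow> x k})"
        unfolding F_def X_def using xy hx by force
    next
      fix v assume "v \<in> F ` (SIGMA x:X. {y. \<forall>k. y k \<longrightarrow> x k})"
      then obtain x y where x: "x \<in> X" and y: "\<forall>k. y k \<longrightarrow> x k" and v: "v = join n (xr x y) y"
        unfolding F_def by auto
      have xV: "x \<in> V n" using x coset_V unfolding X_def by blast
      then have yV: "y \<in> V n" using y unfolding V_def by auto
      have "{k. k<2^n \<and> y k \<and> \<not> x k} = {}" using y by auto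
      then have "hw (Suc n) v = 2^p" using wt[of x y] x yV v unfolding X_def by simp
      moreover have "v \<in> coset (Suc n) i" unfolding coset_lo[OF True] v using x yV unfolding X_def by auto
      ultimately show "v \<in> {v\<in>coset (Suc n) i. hw (Suc n) v = 2^p}" by simp
    qed
    have inj: "inj_on F (SIGMA x:X. {y. \<forall>k. y k \<longrightarrow> x k})"
    proof (rule inj_onI)
      fix a b assume a: "a \<in> (SIGMA x:X. {y. \<forall>k. y k \<longrightarrow> x k})" and b: "b \<in> (SIGMA x:X. {y. \<forall>k. y k \<longrightarrow> x k})"
        and ab: "F a = F b"
      obtain x y where axy: "a = (x,y)" by fastforce
      obtain x' y' where bxy: "b = (x',y')" by fastforce
      have xV: "x \<in> V n" "x' \<in> V n" using a b axy bxy coset_V unfolding X_def by auto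
      have j: "join n (xr x y) y = join n (xr x' y') y'" using ab axy bxy F_def by simp
      have yy: "y = y'"
      proof
        fix k show "y k = y' k" using fun_cong[OF j, of "2^n + k"] unfolding join_def by simp
      qed
      have "x = x'"
      proof
        fix k show "x k = x' k"
        proof (cases "k < 2^n")
          case True then show ?thesis using fun_cong[OF j, of k] yy unfolding join_def xr_def by auto
        next
          case False then show ?thesis using xV unfolding V_def by auto
        qed
      qed
      then show "a = b" using axy bxy yy by simp
    qed
    have finX: "finite X" unfolding X_def using finite_coset by simp
    have cs: "card {y. \<forall>k. y k \<longrightarrow> x k} = 2^(2^p)" if "x \<in> X" for x
    proof -
      have "x \<in> V n" using that coset_V unfolding X_def by blast
      then show ?thesis using card_sub that unfolding X_def by simp
    qed
    have fin: "\<forall>x\<in>X. finite {y. \<forall>k. y k \<longrightarrow> x k}"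
      using cs by (metis card_ge_0_finite zero_less_numeral zero_less_power)
    have cX: "card X = 2^EE n i" using IH unfolding X_def p_def by simp
    have "card {v\<in>coset (Suc n) i. hw (Suc n) v = 2^p} = card (SIGMA x:X. {y. \<forall>k. y k \<longrightarrow> x k})"
      unfolding eq using card_image[OF inj] .
    also have "\<dots> = (\<Sum>x\<in>X. 2^(2^p))" using card_SigmaI[OF finX fin] cs by simp
    also have "\<dots> = 2^EE (Suc n) i" unfolding ES using cX by (simp add: power_add)
    finally show ?thesis using g lb pS by simp
  next
    case False
    then obtain i' where i': "i = 2^n + i'" "i' < 2^n" using Suc.prems
      by (metis add.commute le_add_diff_inverse2 mult_2 not_less power_Suc add_less_cancel_right)
    note IH = Suc.IH[OF i'(2)]
    define p where "p = popc n i'"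
    have pS: "popc (Suc n) i = Suc p" unfolding i'(1) p_def popc_Suc popc_shift bd_hi[OF i'(2)] by simp
    have ES: "EE (Suc n) i = EE n i'" unfolding i'(1) EE_hi[OF i'(2)] ..
    have wt: "hw (Suc n) (join n x x) = 2 * hw n x" if "x \<in> coset n i'" for x
    proof -
      have xV: "x \<in> V n" using that coset_V by blast
      show ?thesis unfolding hw_join[OF xV xV] by simp
    qed
    have g: "hw (Suc n) (grow (Suc n) i) = 2^Suc p"
      unfolding i'(1) grow_hi[OF i'(2)] hw_join[OF grow_V grow_V] using IH p_def by simp
    have lb: "\<forall>v\<in>coset (Suc n) i. 2^Suc p \<le> hw (Suc n) v"
      unfolding i'(1) coset_hi[OF i'(2)] using wt IH p_def by auto
    have eq: "{v\<in>coset (Suc n) i. hw (Suc n) v = 2^Suc p} = (\<lambda>x. join n x x) ` {x\<in>coset n i'. hw n x = 2^p}"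
      unfolding i'(1) coset_hi[OF i'(2)] using wt by auto
    have inj: "inj_on (\<lambda>x. join n x x) {x\<in>coset n i'. hw n x = 2^p}"
    proof (rule inj_onI)
      fix x x' assume "join n x x = join n x' x'"
      then show "x = x'"
      proof -
        assume j: "join n x x = join n x' x'"
        show ?thesis
        proof
          fix k show "x k = x' k" using fun_cong[OF j, of "2^n + k"] unfolding join_def by simp
        qed
      qed
    qed
    have "card {v\<in>coset (Suc n) i. hw (Suc n) v = 2^Suc p} = 2^EE (Suc n) i"
      unfolding eq card_image[OF inj] ES using IH p_def by simp
    then show ?thesis using g lb pS by simp
  qed
qed

theorem theorem2:
  fixes n i :: nat
  assumes "i < 2^n"
  shows "hw n (grow n i) = 2 ^ pp (n - 1) i
    \<and> (\<forall>w < hw n (grow n i). S n i w = 0)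
    \<and> log 2 (real (S n i (hw n (grow n i))))
        = real (\<Sum>j<n. (1 - bd j i) * 2 ^ pp j i)"
proof -
  note M = main[OF assms]
  have pp: "pp (n - 1) i = popc n i"
  proof (cases n)
    case 0 then show ?thesis using assms by (simp add: pp_def popc_def bd_def)
  next
    case (Suc m) then show ?thesis by (simp add: pp_popc)
  qed
  have h: "hw n (grow n i) = 2 ^ popc n i" using M by simp
  have z: "\<forall>w < hw n (grow n i). S n i w = 0"
  proof (intro allI impI)
    fix w assume "w < hw n (grow n i)"
    then have "{v\<in>coset n i. hw n v = w} = {}" using M h by fastforce
    then show "S n i w = 0" unfolding S_def by (metis card.empty)
  qed
  have c: "S n i (hw n (grow n i)) = 2 ^ EE n i" unfolding S_def h using M by simp
  have "log 2 (real (S n i (hw n (grow n i)))) = real (EE n i)"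
    unfolding c by (simp add: log_nat_power)
  then show ?thesis using h pp z unfolding EE_def by simp
qed

end
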